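(* Let $k=\mathbb{F}_q$ with $q$ odd, $q>3$, let $n\ge1$, $A=M_{2n}(k)$, $J_{2n}=\begin{pmatrix}0&I_n\\-I_n&0\end{pmatrix}$, and $a^{\sim}=J_{2n}a^{t}J_{2n}^{-1}$ for $a\in A$. Let $V=k^{2n}$ (row vectors, with $A$ acting on the right), and let $[x,y]=\langle x,yJ_{2n}\rangle$ where $\langle\cdot,\cdot\rangle$ is the standard dot product. For every $u\in A^{\times}$ with $u^{\sim}=u$, the map $Q_u:V^2\to k$, $Q_u((x,y))=[xu,y]$, is a nondegenerate split quadratic form on the $4n$-dimensional $k$-vector space $V^2$. Moreover, for any two such $u,u'\in A^{\times}$ with $u^{\sim}=u$, $u'^{\sim}=u'$, the quadratic forms $Q_u$ and $Q_{u'}$ are equivalent.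
   Context: A quadratic form on a finite-dimensional vector space over a field of odd characteristic is nondegenerate if its associated symmetric bilinear form is nondegenerate, and split if it is equivalent to an orthogonal sum of hyperbolic planes. Two quadratic forms $Q,Q'$ on $V^2$ are equivalent if $Q'=Q\circ g$ for some linear automorphism $g$. *)

theory Defs
  imports "HOL-Analysis.Analysis"
begin

text \<open>The index type of \<open>k^(2n)\<close> is \<open>'n + 'n\<close>; the first block \<open>Inl\<close>, the second \<open>Inr\<close>.\<close>

definition Jmat :: "('k::ring_1) ^ ('n::finite + 'n) ^ ('n + 'n)" where
  "Jmat = (\<chi> i j. case (i, j) of
             (Inl a, Inr b) \<Rightarrow> (if a = b then 1 else 0)
           | (Inr a, Inl b) \<Rightarrow> (if a = b then -1 else 0)
           | _ \<Rightarrow> 0)"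

definition tilde :: "('k::field) ^ ('n::finite + 'n) ^ ('n + 'n) \<Rightarrow> 'k ^ ('n + 'n) ^ ('n + 'n)" where
  "tilde a = Jmat ** transpose a ** matrix_inv Jmat"

definition dotp :: "('k::comm_ring_1) ^ 'm::finite \<Rightarrow> 'k ^ 'm \<Rightarrow> 'k" where
  "dotp x y = (\<Sum>i\<in>UNIV. x $ i * y $ i)"

definition sympl :: "('k::comm_ring_1) ^ ('n::finite + 'n) \<Rightarrow> 'k ^ ('n + 'n) \<Rightarrow> 'k" where
  "sympl x y = dotp x (y v* Jmat)"

definition Qu :: "('k::comm_ring_1) ^ ('n::finite + 'n) ^ ('n + 'n) \<Rightarrow> (('k ^ ('n + 'n)) \<times> ('k ^ ('n + 'n))) \<Rightarrow> 'k" where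
  "Qu u v = sympl (fst v v* u) (snd v)"

definition padd :: "(('k::ab_group_add) ^ 'm::finite) \<times> ('k ^ 'm) \<Rightarrow> ('k ^ 'm) \<times> ('k ^ 'm) \<Rightarrow> ('k ^ 'm) \<times> ('k ^ 'm)" where
  "padd v w = (fst v + fst w, snd v + snd w)"

definition psmul :: "('k::ring_1) \<Rightarrow> ('k ^ 'm::finite) \<times> ('k ^ 'm) \<Rightarrow> ('k ^ 'm) \<times> ('k ^ 'm)" where
  "psmul c v = (c *s fst v, c *s snd v)"

definition plinear :: "((('k::ring_1) ^ 'm::finite) \<times> ('k ^ 'm) \<Rightarrow> ('k ^ 'm) \<times> ('k ^ 'm)) \<Rightarrow> bool" where
  "plinear g \<longleftrightarrow> (\<forall>v w. g (padd v w) = padd (g v) (g w)) \<and> (\<forall>c v. g (psmul c v) = psmul c (g v))"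

definition plin_aut :: "((('k::ring_1) ^ 'm::finite) \<times> ('k ^ 'm) \<Rightarrow> ('k ^ 'm) \<times> ('k ^ 'm)) \<Rightarrow> bool" where
  "plin_aut g \<longleftrightarrow> plinear g \<and> bij g"

definition polar :: "((('k::ring_1) ^ 'm::finite) \<times> ('k ^ 'm) \<Rightarrow> 'k) \<Rightarrow> ('k ^ 'm) \<times> ('k ^ 'm) \<Rightarrow> ('k ^ 'm) \<times> ('k ^ 'm) \<Rightarrow> 'k" where
  "polar Q v w = Q (padd v w) - Q v - Q w"

definition quadratic_form :: "((('k::field) ^ 'm::finite) \<times> ('k ^ 'm) \<Rightarrow> 'k) \<Rightarrow> bool" where
  "quadratic_form Q \<longleftrightarrow>
     (\<forall>c v. Q (psmul c v) = c ^ 2 * Q v) \<and>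
     (\<forall>u v w. polar Q (padd u v) w = polar Q u w + polar Q v w) \<and>
     (\<forall>c v w. polar Q (psmul c v) w = c * polar Q v w)"

definition nondegenerate :: "((('k::field) ^ 'm::finite) \<times> ('k ^ 'm) \<Rightarrow> 'k) \<Rightarrow> bool" where
  "nondegenerate Q \<longleftrightarrow> (\<forall>v. (\<forall>w. polar Q v w = 0) \<longrightarrow> v = (0, 0))"

definition equivalent_qf :: "((('k::field) ^ 'm::finite) \<times> ('k ^ 'm) \<Rightarrow> 'k) \<Rightarrow> (('k ^ 'm) \<times> ('k ^ 'm) \<Rightarrow> 'k) \<Rightarrow> bool" where
  "equivalent_qf Q Q' \<longleftrightarrow> (\<exists>g. plin_aut g \<and> Q' = Q \<circ> g)"

text \<open>The orthogonal sum of hyperbolic planes \<open>span(e_i, f_i)\<close>, \<open>i \<in> 'm\<close>, on \<open>k^m \<times> k^m\<close>: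
  \<open>H(a, b) = \<Sum>_i a_i b_i\<close>.\<close>
definition hyperbolic_sum :: "(('k::comm_ring_1) ^ 'm::finite) \<times> ('k ^ 'm) \<Rightarrow> 'k" where
  "hyperbolic_sum v = (\<Sum>i\<in>UNIV. fst v $ i * snd v $ i)"

definition split_qf :: "((('k::field) ^ 'm::finite) \<times> ('k ^ 'm) \<Rightarrow> 'k) \<Rightarrow> bool" where
  "split_qf Q \<longleftrightarrow> equivalent_qf Q hyperbolic_sum"

end

theory Submission
  imports Defs
begin

lemma vm_add: "((x::'a::comm_semiring_1^'m::finite) + y) v* A = x v* A + y v* A"
  by (simp add: vector_matrix_mult_def vec_eq_iff distrib_right sum.distrib)

lemma vm_smul: "((c::'a::comm_semiring_1) *s (x::'a^'m::finite)) v* A = c *s (x v* A)"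
  by (simp add: vector_matrix_mult_def vec_eq_iff sum_distrib_left mult.assoc)

lemma dotp_addl: "dotp ((x::'a::comm_ring_1^'m::finite) + y) z = dotp x z + dotp y z"
  by (simp add: dotp_def distrib_right sum.distrib)
lemma dotp_addr: "dotp (x::'a::comm_ring_1^'m::finite) (y + z) = dotp x y + dotp x z"
  by (simp add: dotp_def distrib_left sum.distrib)
lemma dotp_smull: "dotp ((c::'a::comm_ring_1) *s (x::'a^'m::finite)) z = c * dotp x z"
  by (simp add: dotp_def sum_distrib_left mult.assoc)
lemma dotp_smulr: "dotp (x::'a::comm_ring_1^'m::finite) ((c::'a) *s z) = c * dotp x z"
  by (simp add: dotp_def sum_distrib_left mult_ac)
lemma dotp_axis: "dotp (axis j (1::'a::comm_ring_1)) (z::'a^'m::finite) = z $ j"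
proof -
  have "dotp (axis j 1) z = (\<Sum>i\<in>UNIV. if i = j then z $ i else 0)"
    unfolding dotp_def axis_def by (rule sum.cong) auto
  then show ?thesis by simp
qed
lemma dotp_0l[simp]: "dotp 0 (z::'a::comm_ring_1^'m::finite) = 0" by (simp add: dotp_def)
lemma dotp_0r[simp]: "dotp (z::'a::comm_ring_1^'m::finite) 0 = 0" by (simp add: dotp_def)

lemma sum_UNIV_plus: "(\<Sum>i\<in>(UNIV::('a::finite + 'b::finite) set). f i)
   = (\<Sum>a\<in>UNIV. f (Inl a)) + (\<Sum>b\<in>UNIV. f (Inr b))"
proof -
  have "(UNIV::('a + 'b) set) = range Inl \<union> range Inr"
    by (rule set_eqI, case_tac x) auto
  then have "sum f UNIV = sum f (range Inl) + sum f (range Inr)"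
    by (metis finite finite_imageI sum.union_disjoint Inl_Inr_False disjoint_iff rangeE)
  also have "\<dots> = (\<Sum>a\<in>UNIV. f (Inl a)) + (\<Sum>b\<in>UNIV. f (Inr b))"
    by (simp add: sum.reindex)
  finally show ?thesis .
qed

lemma vJ_Inr: "((y::'k::field^('n::finite+'n)) v* Jmat) $ Inr b = y $ Inl b"
  by (simp add: vector_matrix_mult_def Jmat_def sum_UNIV_plus if_distrib cong: if_cong)
lemma vJ_Inl: "((y::'k::field^('n::finite+'n)) v* Jmat) $ Inl b = - y $ Inr b"
  by (simp add: vector_matrix_mult_def Jmat_def sum_UNIV_plus if_distrib cong: if_cong)

definition wJ :: "'k::field^('n::finite+'n) \<Rightarrow> 'k^('n+'n)" where
  "wJ b = (\<chi> j. case j of Inl a \<Rightarrow> b $ Inr a | Inr a \<Rightarrow> - b $ Inl a)"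

lemma wJ_J: "wJ b v* Jmat = b"
  by (subst vec_eq_iff, rule allI, case_tac i) (simp_all add: vJ_Inr vJ_Inl wJ_def)
lemma J_wJ: "wJ (b v* Jmat) = b"
  by (subst vec_eq_iff, rule allI, case_tac i) (simp_all add: vJ_Inr vJ_Inl wJ_def)

lemma wJ_add: "wJ (a + b) = wJ a + wJ b"
  by (simp add: vec_eq_iff wJ_def split: sum.split)
lemma wJ_smul: "wJ (c *s b) = c *s wJ b"
  by (simp add: vec_eq_iff wJ_def split: sum.split)

lemma Qu_eq: "Qu u v = dotp (fst v v* u) (snd v v* Jmat)"
  by (simp add: Qu_def sympl_def)

lemma polar_Qu: "polar (Qu u) v w =
   dotp (fst v v* u) (snd w v* Jmat) + dotp (fst w v* u) (snd v v* Jmat)"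
  by (simp add: polar_def Qu_eq padd_def vm_add dotp_addl dotp_addr algebra_simps)

lemma qf_Qu: "quadratic_form (Qu (u::'k::field^('n::finite+'n)^('n+'n)))"
  unfolding quadratic_form_def
  by (simp add: polar_Qu Qu_eq psmul_def padd_def vm_add vm_smul dotp_addl dotp_addr
      dotp_smull dotp_smulr algebra_simps power2_eq_square)

lemma plin_autI:
  fixes g f1 f2 h1 h2
  assumes "\<And>x y. g (x, y) = (f1 x, f2 y)"
    and "\<And>x y. f1 (x + y) = f1 x + f1 y" "\<And>c x. f1 (c *s x) = c *s f1 x"
    and "\<And>x y. f2 (x + y) = f2 x + f2 y" "\<And>c x. f2 (c *s x) = c *s f2 x"
    and "\<And>x. h1 (f1 x) = x" "\<And>x. f1 (h1 x) = x"
    and "\<And>x. h2 (f2 x) = x" "\<And>x. f2 (h2 x) = x"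
  shows "plin_aut g"
proof -
  have "plinear g" unfolding plinear_def padd_def psmul_def
    by (simp add: assms(1) split_def) (metis assms(1-5) prod.collapse)
  moreover have "bij g"
  proof (rule o_bij[of "\<lambda>(x,y). (h1 x, h2 y)"])
    show "(\<lambda>(x, y). (h1 x, h2 y)) \<circ> g = id" by (auto simp: fun_eq_iff assms)
    show "g \<circ> (\<lambda>(x, y). (h1 x, h2 y)) = id" by (auto simp: fun_eq_iff assms)
  qed
  ultimately show ?thesis by (simp add: plin_aut_def)
qed

theorem mainTheorem3:
  fixes u u' :: "('k::{field, finite}) ^ ('n::finite + 'n) ^ ('n + 'n)"
  assumes "odd CARD('k)" and "CARD('k) > 3"
  shows "(invertible u \<and> tilde u = u \<longrightarrow>
            quadratic_form (Qu u) \<and> nondegenerate (Qu u) \<and> split_qf (Qu u))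
       \<and> (invertible u \<and> tilde u = u \<and> invertible u' \<and> tilde u' = u' \<longrightarrow>
            equivalent_qf (Qu u) (Qu u'))"
proof (intro conjI impI)
  assume "invertible u \<and> tilde u = u"
  then obtain v where uv: "u ** v = mat 1" "v ** u = mat 1" unfolding invertible_def by blast
  show "quadratic_form (Qu u)" by (rule qf_Qu)
  show "nondegenerate (Qu u)" unfolding nondegenerate_def
  proof (intro allI impI)
    fix p :: "('k ^ ('n + 'n)) \<times> ('k ^ ('n + 'n))"
    assume h: "\<forall>w. polar (Qu u) p w = 0"
    obtain x y where p: "p = (x, y)" by fastforce
    have "x v* u = 0"
    proof (subst vec_eq_iff, intro allI)
      fix j
      have "polar (Qu u) p (0, wJ (axis j 1)) = 0" using h by blast
      then have "dotp (axis j 1) (x v* u) = 0"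
        by (simp add: polar_Qu p wJ_J dotp_def mult.commute)
      then show "(x v* u) $ j = 0 $ j" by (simp add: dotp_axis)
    qed
    then have x0: "x = 0"
      by (metis uv(1) vector_matrix_mul_assoc vector_matrix_mul_rid vector_matrix_mult_0)
    have "y v* Jmat = 0"
    proof (subst vec_eq_iff, intro allI)
      fix j
      have "polar (Qu u) p (axis j 1 v* v, 0) = 0" using h by blast
      then have "dotp (axis j 1) (y v* Jmat) = 0"
        by (simp add: polar_Qu p vector_matrix_mul_assoc uv)
      then show "(y v* Jmat) $ j = 0 $ j" by (simp add: dotp_axis)
    qed
    then have "y = 0" by (metis J_wJ vector_matrix_mult_0 wJ_J)
    with x0 p show "p = (0, 0)" by simp
  qed
  show "split_qf (Qu u)" unfolding split_qf_def equivalent_qf_def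
  proof (intro exI conjI)
    let ?g = "\<lambda>(a::'k^('n+'n), b::'k^('n+'n)). (a v* v, wJ b)"
    show "plin_aut ?g"
      by (rule plin_autI[of _ "\<lambda>x. x v* v" "wJ" "\<lambda>x. x v* u" "\<lambda>x. x v* Jmat"])
        (auto simp: vm_add vm_smul wJ_add wJ_smul vector_matrix_mul_assoc uv wJ_J J_wJ)
    show "hyperbolic_sum = Qu u \<circ> ?g"
      by (auto simp: fun_eq_iff hyperbolic_sum_def Qu_eq vector_matrix_mul_assoc uv wJ_J dotp_def)
  qed
next
  assume "invertible u \<and> tilde u = u \<and> invertible u' \<and> tilde u' = u'"
  then obtain v v' where uv: "u ** v = mat 1" "v ** u = mat 1"
    and uv': "u' ** v' = mat 1" "v' ** u' = mat 1" unfolding invertible_def by blast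
  show "equivalent_qf (Qu u) (Qu u')" unfolding equivalent_qf_def
  proof (intro exI conjI)
    let ?g = "\<lambda>(a::'k^('n+'n), b::'k^('n+'n)). (a v* (u' ** v), b)"
    have e1: "u' ** (v ** (u ** v')) = mat 1" "u ** (v' ** (u' ** v)) = mat 1"
      by (metis matrix_mul_assoc matrix_mul_rid uv uv')+
    show "plin_aut ?g"
      by (rule plin_autI[of _ "\<lambda>x. x v* (u' ** v)" "\<lambda>x. x" "\<lambda>x. x v* (u ** v')" "\<lambda>x. x"])
        (auto simp: vm_add vm_smul vector_matrix_mul_assoc uv uv' e1 matrix_mul_assoc[symmetric]
          matrix_mul_lid matrix_mul_rid)
    show "Qu u' = Qu u \<circ> ?g"
      by (auto simp: fun_eq_iff Qu_eq vector_matrix_mul_assoc uv matrix_mul_assoc[symmetric]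
          matrix_mul_rid)
  qed
qed

end
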